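(* Let $\Omega$ be a magnetic billiard domain (with Larmor radius $r$) having the $\delta$-Gutkin property, $\delta\in(0,\pi)$, and let $\Gamma\subset\Omega_r$ be the curve consisting of the Larmor centers of all Larmor arcs making angle $\delta$ with the boundary $\gamma$. For each $s$ let $P_\pm(s)=\gamma(s)+rR_{\pi/2\pm\delta}\dot\gamma(s)$ (these are the Larmor centers of an arc exiting $\Omega$ at $\gamma(s)$ with angle $\delta$ and of its reflected arc, so $P_+(s)=\mathcal{M}(P_-(s))$ and both lie on $\Gamma$). Then $\Gamma$ is a Zindler curve: the segment $[P_-(s),P_+(s)]$ inscribed in $\Gamma$ has constant length $L=2r\sin\delta$, and as $s$ varies the velocity of its midpoint $M(s)$ is parallel to the segment. Moreover, the midpoints $M(s)$ form a curve $\tilde\Gamma$ which is parallel to $\gamma$ at distance $r\cos\delta$.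
   Context: $\Omega\subset\mathbb{R}^2$ is a bounded domain with boundary $\gamma$ a smooth simple closed curve parametrized counterclockwise by arc length $s$; $R_\epsilon$ denotes counterclockwise rotation by angle $\epsilon$, $J=R_{\pi/2}$, $n=J\dot\gamma$, and $\gamma_t=\gamma+t\,n$. Magnetic billiard with field magnitude $\beta$, Larmor radius $r=1/\beta$: a particle moves in $\Omega$ with unit speed along counterclockwise circles of radius $r$ (Larmor arcs) and is reflected at $\gamma$ by the law of geometric optics. $\Omega_r$ is the annulus between $\gamma_{+r}$ and $\gamma_{-r}$, the set of Larmor centers of circles meeting $\gamma$. The magnetic billiard map $\mathcal{M}:\Omega_r\to\Omega_r$ sends the Larmor center $Q+rR_{\pi/2-\epsilon}\dot\gamma(Q)$ of an arc exiting $\Omega$ at $Q\in\gamma$ with angle $\epsilon\in(0,\pi)$ to the Larmor center $Q+rR_{\pi/2+\epsilon}\dot\gamma(Q)$ of the reflected arc. The billiard has the $\delta$-Gutkin property if every Larmor arc entering $\Omega$ making angle $\delta$ with $\gamma$ exits $\Omega$ making angle $\delta$ with $\gamma$; equivalently, $\Gamma$ is invariant under $\mathcal{M}$. *)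

theory Defs
  imports "HOL-Complex_Analysis.Complex_Analysis"
begin

text \<open>The plane R^2 is identified with the complex numbers; the counterclockwise
rotation R_eps is multiplication by cis eps, and J = R_{pi/2} is multiplication by i.\<close>

definition smooth_curve :: "(real \<Rightarrow> complex) \<Rightarrow> bool" where
  "smooth_curve g \<longleftrightarrow>
     (\<exists>D :: nat \<Rightarrow> real \<Rightarrow> complex. D 0 = g \<and>
        (\<forall>k t. (D k has_vector_derivative D (Suc k) t) (at t)))"

definition billiard_boundary :: "(real \<Rightarrow> complex) \<Rightarrow> real \<Rightarrow> bool" where
  "billiard_boundary g L \<longleftrightarrow>
     L > 0 \<and> smooth_curve g \<and>
     (\<forall>t. g (t + L) = g t) \<and>
     inj_on g {0..<L} \<and>
     (\<forall>t. norm (vector_derivative g (at t)) = 1) \<and>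
     (\<forall>z \<in> inside (g ` {0..L}). winding_number (\<lambda>u. g (L * u)) z = 1)"

text \<open>Unit tangent and (inner) unit normal n = J gamma'.\<close>
definition tangent :: "(real \<Rightarrow> complex) \<Rightarrow> real \<Rightarrow> complex" where
  "tangent g s = vector_derivative g (at s)"

definition normal :: "(real \<Rightarrow> complex) \<Rightarrow> real \<Rightarrow> complex" where
  "normal g s = \<i> * tangent g s"

definition parallel_curve :: "(real \<Rightarrow> complex) \<Rightarrow> real \<Rightarrow> real \<Rightarrow> complex" where
  "parallel_curve g t s = g s + of_real t * normal g s"

text \<open>Larmor centre of the arc exiting at gamma(s) with angle eps, and of the reflected
arc (i.e. of the arc entering at gamma(s) with angle eps).\<close>
definition exit_centre :: "(real \<Rightarrow> complex) \<Rightarrow> real \<Rightarrow> real \<Rightarrow> real \<Rightarrow> complex" where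
  "exit_centre g r eps s = g s + of_real r * cis (pi/2 - eps) * tangent g s"

definition entry_centre :: "(real \<Rightarrow> complex) \<Rightarrow> real \<Rightarrow> real \<Rightarrow> real \<Rightarrow> complex" where
  "entry_centre g r eps s = g s + of_real r * cis (pi/2 + eps) * tangent g s"

definition larmor_point :: "complex \<Rightarrow> complex \<Rightarrow> real \<Rightarrow> complex" where
  "larmor_point c p \<theta> = c + (p - c) * cis \<theta>"

definition gutkin :: "(real \<Rightarrow> complex) \<Rightarrow> real \<Rightarrow> real \<Rightarrow> bool" where
  "gutkin g r \<delta> \<longleftrightarrow>
     (\<forall>s \<theta>1. let c = entry_centre g r \<delta> s in
        (\<theta>1 > 0 \<and> larmor_point c (g s) \<theta>1 \<in> range g \<and>
         (\<forall>\<theta> \<in> {0<..<\<theta>1}. larmor_point c (g s) \<theta> \<notin> range g))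
        \<longrightarrow> (\<exists>s1. g s1 = larmor_point c (g s) \<theta>1 \<and> c = exit_centre g r \<delta> s1))"

text \<open>Gamma: Larmor centres of all arcs making angle delta with the boundary
(taken as the centres of arcs exiting with angle delta).\<close>
definition Gamma :: "(real \<Rightarrow> complex) \<Rightarrow> real \<Rightarrow> real \<Rightarrow> complex set" where
  "Gamma g r \<delta> = range (exit_centre g r \<delta>)"

end

theory Submission
  imports Defs
begin
lemma per_nat:
  fixes L :: real and g :: "real \<Rightarrow> complex" assumes "\<forall>t. g (t + L) = g t"
  shows "g (t + real k * L) = g t"
proof (induct k arbitrary: t)
  case 0 then show ?case by simp
next
  case (Suc k)
  have "g (t + real (Suc k) * L) = g ((t + real k * L) + L)" by (simp add: algebra_simps)
  also have "\<dots> = g t" using assms Suc by simp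
  finally show ?case .
qed

lemma per_int:
  fixes L :: real and g :: "real \<Rightarrow> complex" assumes "\<forall>t. g (t + L) = g t"
  shows "g (t + of_int n * L) = g t"
proof (cases "n \<ge> 0")
  case True
  then obtain k where "n = int k" by (metis nonneg_eq_int)
  then show ?thesis using per_nat[OF assms] by simp
next
  case False
  obtain k where k: "n = - int k" using False by (intro that[of "nat (- n)"]) simp
  have "g t = g ((t + of_int n * L) + real k * L)" using k by (simp add: algebra_simps)
  also have "\<dots> = g (t + of_int n * L)" using per_nat[OF assms] by blast
  finally show ?thesis by simp
qed

lemma window:
  fixes L :: real and g :: "real \<Rightarrow> complex" assumes "\<forall>t. g (t + L) = g t" "L > 0"
  shows "\<exists>t'\<in>{s - L/2..s + L/2}. g t' = g t"
proof -
  define n where "n = \<lfloor>(t - s + L/2) / L\<rfloor>"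
  have a: "of_int n * L \<le> t - s + L/2" unfolding n_def using assms(2) floor_divide_lower by blast
  have b: "t - s + L/2 < (of_int n + 1) * L" unfolding n_def using assms(2) floor_divide_upper by blast
  have "g (t + of_int (-n) * L) = g t" using per_int[OF assms(1)] by blast
  moreover have "t + of_int (-n) * L \<in> {s - L/2..s + L/2}"
  proof -
    have "(of_int n + 1) * L = of_int n * L + L" by (simp add: distrib_right)
    then show ?thesis using a b by simp
  qed
  ultimately show ?thesis by blast
qed

lemma window_inj:
  fixes L :: real and g :: "real \<Rightarrow> complex" assumes "\<forall>t. g (t + L) = g t" "L > 0" "inj_on g {0..<L}"
    and "t \<in> {s - L/2..s + L/2}" "g t = g s"
  shows "t = s"
proof -
  define a where "a = t + of_int (- \<lfloor>t/L\<rfloor>) * L"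
  define b where "b = s + of_int (- \<lfloor>s/L\<rfloor>) * L"
  have ga: "g a = g t" unfolding a_def by (rule per_int[OF assms(1)])
  have gb: "g b = g s" unfolding b_def by (rule per_int[OF assms(1)])
  have aL: "a \<in> {0..<L}" unfolding a_def using floor_divide_lower[OF assms(2), of t] floor_divide_upper[OF assms(2), of t]
    by (simp add: distrib_right)
  have bL: "b \<in> {0..<L}" unfolding b_def using floor_divide_lower[OF assms(2), of s] floor_divide_upper[OF assms(2), of s]
    by (simp add: distrib_right)
  have "g a = g b" using ga gb assms(5) by simp
  then have "a = b" using inj_onD[OF assms(3) _ aL bL] by blast
  then have e: "t - s = of_int (\<lfloor>t/L\<rfloor> - \<lfloor>s/L\<rfloor>) * L" unfolding a_def b_def by (simp add: left_diff_distrib)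
  define m where "m = \<lfloor>t/L\<rfloor> - \<lfloor>s/L\<rfloor>"
  have e': "t - s = of_int m * L" using e unfolding m_def .
  have "s - L/2 \<le> t" "t \<le> s + L/2" using assms(4) by auto
  then have "\<bar>t - s\<bar> \<le> 1/2 * L" by arith
  then have "\<bar>of_int m\<bar> * L \<le> 1/2 * L" using assms(2) e' by (simp only: abs_mult abs_of_pos)
  then have "\<bar>real_of_int m\<bar> \<le> 1/2" using assms(2) by (simp add: mult_le_cancel_right)
  then have "m = 0" by linarith
  then show ?thesis using e m_def by simp
qed


lemma cis_minus_one: "cis \<theta> - 1 = 2 * \<i> * of_real (sin (\<theta>/2)) * cis (\<theta>/2)"
proof -
  have "cos \<theta> = 1 - 2 * sin (\<theta>/2) ^ 2" using cos_double_sin[of "\<theta>/2"] by simp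
  moreover have "sin \<theta> = 2 * sin (\<theta>/2) * cos (\<theta>/2)" using sin_double[of "\<theta>/2"] by simp
  ultimately show ?thesis by (simp add: complex_eq_iff power2_eq_square algebra_simps)
qed

lemma larmor_formula:
  "larmor_point (p + of_real r * cis (pi/2 + \<delta>) * T) p \<theta> - p
     = of_real (2 * r * sin (\<theta>/2)) * cis (\<delta> + \<theta>/2) * T"
proof -
  have c: "cis (pi/2 + \<delta>) = \<i> * cis \<delta>" by (simp add: complex_eq_iff cos_add sin_add)
  have "larmor_point (p + of_real r * cis (pi/2 + \<delta>) * T) p \<theta> - p
     = - (of_real r * cis (pi/2 + \<delta>) * T) * (cis \<theta> - 1)"
    unfolding larmor_point_def by (simp add: algebra_simps)
  also have "\<dots> = of_real (2 * r * sin (\<theta>/2)) * (cis \<delta> * cis (\<theta>/2)) * T"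
    unfolding cis_minus_one c by (simp add: algebra_simps)
  also have "\<dots> = of_real (2 * r * sin (\<theta>/2)) * cis (\<delta> + \<theta>/2) * T" by (simp add: cis_mult)
  finally show ?thesis .
qed

lemma sin_lower:
  assumes "0 < \<delta>" "\<delta> < pi"
  obtains m where "m > 0" "\<And>x. \<delta> \<le> x \<Longrightarrow> x \<le> (pi + \<delta>)/2 \<Longrightarrow> m \<le> sin x"
proof -
  define b where "b = max \<bar>pi/2 - \<delta>\<bar> (\<delta>/2)"
  have b0: "0 \<le> b" "b < pi/2" using assms unfolding b_def by (auto simp: max_def abs_if)
  have "cos b > 0" using b0 by (intro cos_gt_zero_pi) auto
  moreover have "cos b \<le> sin x" if "\<delta> \<le> x" "x \<le> (pi + \<delta>)/2" for x
  proof -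
    have "sin x = cos (x - pi/2)" by (simp add: cos_diff)
    then have "sin x = cos \<bar>x - pi/2\<bar>" by (metis abs_minus_cancel abs_of_nonneg abs_of_nonpos cos_minus linear minus_diff_eq)
    moreover have "\<bar>x - pi/2\<bar> \<le> b" using that unfolding b_def by auto
    ultimately show ?thesis using b0 cos_monotone_0_pi_le[of "\<bar>x - pi/2\<bar>" b] by auto
  qed
  ultimately show ?thesis using that by blast
qed

lemma first_hit:
  fixes g :: "real \<Rightarrow> complex" and L s r \<delta> :: real and T :: complex
  assumes per: "\<forall>t. g (t + L) = g t" and L0: "L > 0" and inj: "inj_on g {0..<L}"
    and cont: "continuous_on UNIV g"
    and der: "(g has_vector_derivative T) (at s)" and nT: "norm T = 1"
    and r0: "r > 0" and d0: "0 < \<delta>" and d1: "\<delta> < pi"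
  defines "q \<equiv> larmor_point (g s + of_real r * cis (pi/2 + \<delta>) * T) (g s)"
  shows "\<exists>\<theta>1>0. q \<theta>1 \<in> range g \<and> (\<forall>\<theta>\<in>{0<..<\<theta>1}. q \<theta> \<notin> range g)"
proof -
  have qf: "q \<theta> - g s = of_real (2 * r * sin (\<theta>/2)) * cis (\<delta> + \<theta>/2) * T" for \<theta>
    unfolding q_def by (rule larmor_formula)
  obtain m where m0: "m > 0" and mle: "\<And>x. \<delta> \<le> x \<Longrightarrow> x \<le> (pi + \<delta>)/2 \<Longrightarrow> m \<le> sin x"
    using sin_lower[OF d0 d1] by blast
  have "m \<le> sin \<delta>" using mle[of \<delta>] d1 by simp
  then have m1: "m \<le> 1" using sin_le_one[of \<delta>] by linarith
  define k where "k = m/4"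
  have k0: "k > 0" using m0 k_def by simp
  have "(g has_derivative (\<lambda>h. h *\<^sub>R T)) (at s)" using der by (simp add: has_vector_derivative_def)
  then obtain \<eta> where \<eta>0: "\<eta> > 0" and \<eta>: "\<And>t. norm (t - s) < \<eta> \<Longrightarrow>
      norm (g t - g s - (t - s) *\<^sub>R T) \<le> k * norm (t - s)"
    unfolding has_derivative_at_alt using k0 by blast
  have claim1: "g t \<noteq> q \<theta>" if th: "0 < \<theta>" "\<theta> < pi - \<delta>" and t: "\<bar>t - s\<bar> < \<eta>" "t \<noteq> s" for t \<theta>
  proof
    assume eq: "g t = q \<theta>"
    define \<rho> where "\<rho> = 2 * r * sin (\<theta>/2)"
    have \<rho>0: "\<rho> > 0" unfolding \<rho>_def using r0 th d0 by (intro mult_pos_pos sin_gt_zero) auto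
    define u where "u = (g t - g s) / T"
    have T0: "T \<noteq> 0" using nT by auto
    have uf: "u = of_real \<rho> * cis (\<delta> + \<theta>/2)" unfolding u_def eq qf \<rho>_def using T0 by simp
    have nu: "norm u = \<rho>" using uf \<rho>0 by (simp add: norm_mult)
    have imu: "Im u \<ge> m * \<rho>" using uf \<rho>0 mle[of "\<delta> + \<theta>/2"] th by (simp add: mult.commute)
    have "u - of_real (t - s) = (g t - g s - (t - s) *\<^sub>R T) / T"
      unfolding u_def using T0 by (simp add: scaleR_conv_of_real field_simps)
    then have "norm (u - of_real (t - s)) = norm (g t - g s - (t - s) *\<^sub>R T) / norm T"
      by (simp add: norm_divide)
    also have "\<dots> \<le> k * \<bar>t - s\<bar>" using \<eta> t nT by simp
    finally have e: "norm (u - of_real (t - s)) \<le> k * \<bar>t - s\<bar>" .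
    have "\<bar>Im u\<bar> \<le> norm (u - of_real (t - s))" using abs_Im_le_cmod[of "u - of_real (t - s)"] by simp
    then have i1: "m * \<rho> \<le> k * \<bar>t - s\<bar>" using e imu by linarith
    have nts: "norm (of_real (t - s) :: complex) = \<bar>t - s\<bar>" by (rule norm_of_real)
    have "\<bar>t - s\<bar> - norm u \<le> norm (u - of_real (t - s))"
      unfolding nts[symmetric]
      using norm_triangle_ineq2[of "of_real (t - s)" u] norm_minus_commute[of u "of_real (t - s)"] by simp
    then have i2: "(1 - k) * \<bar>t - s\<bar> \<le> \<rho>" using e nu by (simp add: algebra_simps)
    have "m * ((1 - k) * \<bar>t - s\<bar>) \<le> m * \<rho>" using i2 m0 by simp
    then have "m * (1 - k) * \<bar>t - s\<bar> \<le> k * \<bar>t - s\<bar>" using i1 by simp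
    then have "m * (1 - k) \<le> k" using t by simp
    moreover have "m * (3/4) \<le> m * (1 - k)" using m0 m1 unfolding k_def by (intro mult_left_mono) auto
    ultimately show False using m0 unfolding k_def by linarith
  qed
  define A where "A = g ` ({s - L/2..s + L/2} - ball s \<eta>)"
  have "compact A" unfolding A_def
    by (intro compact_continuous_image continuous_on_subset[OF cont] compact_diff) auto
  then have cA: "closed A" by (rule compact_imp_closed)
  have "g s \<notin> A"
  proof
    assume "g s \<in> A"
    then obtain t where "t \<in> {s - L/2..s + L/2}" "t \<notin> ball s \<eta>" "g t = g s" unfolding A_def by auto
    then show False using window_inj[OF per L0 inj] \<eta>0 by fastforce
  qed
  then obtain d where dpos: "d > 0" and dA: "\<And>x. x \<in> A \<Longrightarrow> d \<le> dist (g s) x"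
    using separate_point_closed[OF cA] by blast
  define \<epsilon> where "\<epsilon> = min (pi - \<delta>) (d / r)"
  have \<epsilon>0: "\<epsilon> > 0" unfolding \<epsilon>_def using dpos r0 d1 by auto
  have \<epsilon>1: "\<epsilon> \<le> 2 * pi" unfolding \<epsilon>_def using d0 pi_gt_zero min.cobounded1[of "pi - \<delta>" "d/r"] by linarith
  have claim2: "q \<theta> \<notin> range g" if th: "0 < \<theta>" "\<theta> < \<epsilon>" for \<theta>
  proof
    assume "q \<theta> \<in> range g"
    then obtain t0 where "q \<theta> = g t0" by auto
    then obtain t where tw: "t \<in> {s - L/2..s + L/2}" and gt: "g t = q \<theta>"
      using window[OF per L0, of s t0] by auto
    define \<rho> where "\<rho> = 2 * r * sin (\<theta>/2)"
    have \<rho>0: "\<rho> > 0" unfolding \<rho>_def using r0 th d0 \<epsilon>_def d1 by (intro mult_pos_pos sin_gt_zero) auto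
    have "norm (q \<theta> - g s) = \<bar>\<rho>\<bar>" unfolding qf \<rho>_def by (simp only: norm_mult norm_of_real norm_cis nT mult_1_right)
    then have nq: "norm (q \<theta> - g s) = \<rho>" using \<rho>0 by simp
    show False
    proof (cases "\<bar>t - s\<bar> < \<eta>")
      case True
      have "t \<noteq> s" using gt nq \<rho>0 by auto
      moreover have "\<theta> < pi - \<delta>" using th(2) unfolding \<epsilon>_def by simp
      ultimately show False using claim1[OF th(1) _ True] gt by blast
    next
      case False
      then have "g t \<in> A" unfolding A_def using tw by (auto simp: dist_real_def)
      then have "d \<le> norm (q \<theta> - g s)" using dA gt by (metis dist_norm dist_commute)
      moreover have "\<rho> \<le> r * \<theta>"
      proof -
        have "sin (\<theta>/2) \<le> \<theta>/2" using abs_sin_x_le_abs_x[of "\<theta>/2"] th by linarith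
        then have "2 * r * sin (\<theta>/2) \<le> 2 * r * (\<theta>/2)" using r0 by (intro mult_left_mono) auto
        then show ?thesis unfolding \<rho>_def by simp
      qed
      moreover have "r * \<theta> < d" using th r0 unfolding \<epsilon>_def by (simp add: field_simps)
      ultimately show False using nq by simp
    qed
  qed
  have rg: "range g = g ` {s - L/2..s + L/2}" using window[OF per L0, of s] by (auto simp: image_iff) metis
  have "closed (range g)" unfolding rg
    by (intro compact_imp_closed compact_continuous_image continuous_on_subset[OF cont]) auto
  moreover have "continuous_on UNIV q" unfolding q_def larmor_point_def by (intro continuous_intros)
  ultimately have "closed (q -` range g)" by (rule closed_vimage)
  then have cS: "closed ({\<epsilon>..2*pi} \<inter> q -` range g)" by (intro closed_Int) auto
  define S where "S = {\<epsilon>..2*pi} \<inter> q -` range g"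
  have "q (2*pi) = g s" unfolding q_def larmor_point_def by simp
  then have S2: "2 * pi \<in> S" unfolding S_def using \<epsilon>1 by auto
  have bS: "bdd_below S" unfolding S_def by (rule bdd_belowI[of _ \<epsilon>]) auto
  have Sne: "S \<noteq> {}" using S2 by auto
  have cS': "closed S" using cS unfolding S_def .
  have IS: "Inf S \<in> S" using closed_contains_Inf[OF Sne bS cS'] .
  show ?thesis
  proof (intro exI conjI ballI)
    show "Inf S > 0" using IS \<epsilon>0 unfolding S_def by auto
    show "q (Inf S) \<in> range g" using IS unfolding S_def by auto
    fix \<theta> assume th: "\<theta> \<in> {0<..<Inf S}"
    show "q \<theta> \<notin> range g"
    proof (cases "\<theta> < \<epsilon>")
      case True then show ?thesis using claim2 th by auto
    next
      case False
      have "\<theta> \<le> 2 * pi" using th cInf_lower[OF S2 bS] by auto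
      have "\<theta> \<notin> S"
      proof
        assume "\<theta> \<in> S"
        then have "Inf S \<le> \<theta>" using cInf_lower[OF _ bS] by blast
        then show False using th by simp
      qed
      moreover have "\<theta> \<in> {\<epsilon>..2*pi}" using False \<open>\<theta> \<le> 2 * pi\<close> by simp
      ultimately show ?thesis unfolding S_def by blast
    qed
  qed
qed

theorem theorem3p1:
  fixes g :: "real \<Rightarrow> complex" and L r \<delta> :: real
  assumes "billiard_boundary g L"
    and "r > 0"
    and "0 < \<delta>" and "\<delta> < pi"
    and "gutkin g r \<delta>"
  defines "Pm \<equiv> exit_centre g r \<delta>"
    and "Pp \<equiv> entry_centre g r \<delta>"
    and "M \<equiv> (\<lambda>s. (exit_centre g r \<delta> s + entry_centre g r \<delta> s) / 2)"
  shows "\<forall>s. Pm s \<in> Gamma g r \<delta> \<and> Pp s \<in> Gamma g r \<delta>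
           \<and> dist (Pm s) (Pp s) = 2 * r * sin \<delta>
           \<and> (\<exists>v. (M has_vector_derivative v) (at s)
                  \<and> (\<exists>k::real. v = of_real k * (Pp s - Pm s)))
           \<and> M s = parallel_curve g (r * cos \<delta>) s"
proof
  fix s
  note bb = assms(1)[unfolded billiard_boundary_def]
  have L0: "L > 0" and per: "\<forall>t. g (t + L) = g t" and inj: "inj_on g {0..<L}"
    and nv: "\<forall>t. norm (vector_derivative g (at t)) = 1" using bb by auto
  obtain D :: "nat \<Rightarrow> real \<Rightarrow> complex" where D0: "D 0 = g"
    and DD: "\<And>k t. (D k has_vector_derivative D (Suc k) t) (at t)"
    using bb unfolding smooth_curve_def by blast
  have gd: "(g has_vector_derivative D 1 t) (at t)" for t using DD[of 0 t] D0 by simp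
  have tan: "tangent g t = D 1 t" for t unfolding tangent_def using gd by (rule vector_derivative_at)
  have n1: "norm (D 1 t) = 1" for t using nv tan unfolding tangent_def by metis
  have cont: "continuous_on UNIV g"
    using gd by (intro continuous_at_imp_continuous_on ballI has_vector_derivative_continuous) blast
  define T where "T = tangent g s"
  have nT: "norm T = 1" using n1 tan T_def by simp
  have cp: "cis (pi/2 + \<delta>) = \<i> * cis \<delta>" by (simp add: complex_eq_iff cos_add sin_add)
  have cm: "cis (pi/2 - \<delta>) = \<i> * cis (- \<delta>)" by (simp add: complex_eq_iff cos_diff sin_diff)
  have cdiff: "cis (pi/2 - \<delta>) - cis (pi/2 + \<delta>) = of_real (2 * sin \<delta>)"
    unfolding cp cm by (simp add: complex_eq_iff)
  have csum: "cis (pi/2 - \<delta>) + cis (pi/2 + \<delta>) = of_real (2 * cos \<delta>) * \<i>"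
    unfolding cp cm by (simp add: complex_eq_iff)
  have sd: "sin \<delta> > 0" using assms(3,4) by (rule sin_gt_zero)
  have A1: "Pm s \<in> Gamma g r \<delta>" unfolding Pm_def Gamma_def by simp
  have A2: "Pp s \<in> Gamma g r \<delta>"
  proof -
    define c where "c = entry_centre g r \<delta> s"
    have c_eq: "c = g s + of_real r * cis (pi/2 + \<delta>) * T" unfolding c_def entry_centre_def T_def ..
    have der: "(g has_vector_derivative T) (at s)" unfolding T_def tan by (rule gd)
    obtain \<theta>1 where th: "\<theta>1 > 0" "larmor_point c (g s) \<theta>1 \<in> range g"
      "\<forall>\<theta>\<in>{0<..<\<theta>1}. larmor_point c (g s) \<theta> \<notin> range g"
      using first_hit[OF per L0 inj cont der nT assms(2,3,4)] unfolding c_eq by blast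
    have "\<exists>s1. g s1 = larmor_point c (g s) \<theta>1 \<and> c = exit_centre g r \<delta> s1"
      using assms(5) th unfolding gutkin_def Let_def c_def by blast
    then obtain s1 where "c = exit_centre g r \<delta> s1" by blast
    then show ?thesis unfolding Pp_def Gamma_def c_def by simp
  qed
  have PmPp: "Pp s - Pm s = - of_real (2 * r * sin \<delta>) * T"
  proof -
    have "Pm s - Pp s = of_real r * (cis (pi/2 - \<delta>) - cis (pi/2 + \<delta>)) * T"
      unfolding Pm_def Pp_def exit_centre_def entry_centre_def T_def by (simp add: algebra_simps)
    then show ?thesis unfolding cdiff by (simp add: algebra_simps)
  qed
  have A3: "dist (Pm s) (Pp s) = 2 * r * sin \<delta>"
  proof -
    have "dist (Pm s) (Pp s) = norm (Pp s - Pm s)" by (simp add: dist_norm norm_minus_commute)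
    also have "\<dots> = \<bar>2 * r * sin \<delta>\<bar>" unfolding PmPp by (simp only: norm_minus_cancel norm_mult norm_of_real nT mult_1_right)
    finally show ?thesis using assms(2) sd by simp
  qed
  have Mf: "M = (\<lambda>t. g t + of_real (r * cos \<delta>) * \<i> * D 1 t)"
  proof
    fix t
    have "M t = g t + of_real r * ((cis (pi/2 - \<delta>) + cis (pi/2 + \<delta>)) / 2) * tangent g t"
      unfolding M_def exit_centre_def entry_centre_def by (simp add: algebra_simps add_divide_distrib)
    then show "M t = g t + of_real (r * cos \<delta>) * \<i> * D 1 t" unfolding csum tan by simp
  qed
  have A5: "M s = parallel_curve g (r * cos \<delta>) s"
    unfolding Mf parallel_curve_def normal_def tan by (simp add: algebra_simps)
  define a where "a = D 1 s"
  define b where "b = D 2 s"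
  have orth: "a \<bullet> b = 0"
  proof -
    have d1: "(D 1 has_derivative (\<lambda>h. h *\<^sub>R b)) (at s)"
      using DD[of 1 s] unfolding b_def has_vector_derivative_def by (simp add: numeral_2_eq_2)
    have "((\<lambda>t. D 1 t \<bullet> D 1 t) has_derivative (\<lambda>h. D 1 s \<bullet> (h *\<^sub>R b) + (h *\<^sub>R b) \<bullet> D 1 s)) (at s)"
      by (rule has_derivative_inner[OF d1 d1])
    moreover have "(\<lambda>t. D 1 t \<bullet> D 1 t) = (\<lambda>t. 1)"
    proof
      fix t show "D 1 t \<bullet> D 1 t = 1" using n1[of t] by (simp add: power2_norm_eq_inner[symmetric])
    qed
    ultimately have h1: "((\<lambda>t. 1::real) has_derivative (\<lambda>h. D 1 s \<bullet> (h *\<^sub>R b) + (h *\<^sub>R b) \<bullet> D 1 s)) (at s)" by simp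
    have h2: "((\<lambda>t. 1::real) has_derivative (\<lambda>h. 0)) (at s)" by (rule has_derivative_const)
    have "(\<lambda>h. D 1 s \<bullet> (h *\<^sub>R b) + (h *\<^sub>R b) \<bullet> D 1 s) = (\<lambda>h. 0)"
      using has_derivative_unique[OF h1 h2] .
    then have "D 1 s \<bullet> (1 *\<^sub>R b) + (1 *\<^sub>R b) \<bullet> D 1 s = 0" by metis
    then show ?thesis unfolding a_def by (simp add: inner_commute)
  qed
  define \<kappa> where "\<kappa> = Im (b * cnj a)"
  have na: "a * cnj a = 1" using n1[of s] unfolding a_def
    by (simp add: complex_norm_square[symmetric])
  have bk: "b = \<i> * of_real \<kappa> * a"
  proof -
    have "Re (b * cnj a) = 0" using orth by (simp add: inner_complex_def algebra_simps)
    then have "b * cnj a = \<i> * of_real \<kappa>" unfolding \<kappa>_def by (simp add: complex_eq_iff)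
    then have "b * (a * cnj a) = \<i> * of_real \<kappa> * a" by (metis mult.assoc mult.commute)
    then show ?thesis using na by simp
  qed
  define v where "v = a + of_real (r * cos \<delta>) * \<i> * b"
  have A4: "(M has_vector_derivative v) (at s)"
  proof -
    have "((\<lambda>t. of_real (r * cos \<delta>) * \<i> * D 1 t) has_vector_derivative of_real (r * cos \<delta>) * \<i> * b) (at s)"
      using DD[of 1 s] unfolding b_def by (intro has_vector_derivative_mult_right) (simp add: numeral_2_eq_2)
    then show ?thesis unfolding Mf v_def a_def using gd[of s] by (intro has_vector_derivative_add) auto
  qed
  have vk: "v = of_real (- (1 - r * cos \<delta> * \<kappa>) / (2 * r * sin \<delta>)) * (Pp s - Pm s)"
  proof -
    define c1 where "c1 = 1 - r * cos \<delta> * \<kappa>"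
    define w where "w = 2 * r * sin \<delta>"
    have e1: "v = of_real c1 * a" unfolding v_def bk c1_def by (simp add: algebra_simps)
    have e2: "Pp s - Pm s = of_real (- w) * a" unfolding PmPp T_def tan a_def w_def by simp
    have "w \<noteq> 0" using assms(2) sd unfolding w_def by simp
    then have e3: "(- c1 / w) * (- w) = c1" by simp
    have "of_real (- c1 / w) * (Pp s - Pm s) = of_real ((- c1 / w) * (- w)) * a"
      unfolding e2 by (simp only: of_real_mult mult.assoc)
    then show ?thesis unfolding e3 e1 c1_def[symmetric] w_def[symmetric] by simp
  qed
  show "Pm s \<in> Gamma g r \<delta> \<and> Pp s \<in> Gamma g r \<delta>
           \<and> dist (Pm s) (Pp s) = 2 * r * sin \<delta>
           \<and> (\<exists>v. (M has_vector_derivative v) (at s)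
                  \<and> (\<exists>k::real. v = of_real k * (Pp s - Pm s)))
           \<and> M s = parallel_curve g (r * cos \<delta>) s"
    using A1 A2 A3 A4 A5 vk by blast
qed

end
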